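(* Let $\mathcal A_1'=\mathrm{MSG}(\mathcal S_1)\setminus\{a_n\}$, for $s\in\mathbb N$ let $\mathrm{Ap}_1^{(s)}=\mathrm{Ap}_1\cap s\mathcal A_1'$, and let $N=\max\{s\in\mathbb N:\mathrm{Ap}_1^{(s)}\ne\emptyset\}$. Then $(\mathrm{Ap}_1,\le_1)$ is graded if and only if $\sum_{s=0}^{N}|\mathrm{Ap}_1^{(s)}|=d$.
   Context: Let $d\ge 1$ and $0<a_1<\dots<a_n=d$ integers with $\gcd(a_1,\dots,a_n)=1$. Let $\mathcal S_1\subseteq\mathbb N$ be the numerical semigroup generated by $a_1,\dots,a_n$ and $\mathrm{MSG}(\mathcal S_1)$ its minimal system of generators. Partial order: $y\le_1 z$ iff $z-y\in\mathcal S_1$. $\mathrm{Ap}_1=\{y\in\mathcal S_1:y-d\notin\mathcal S_1\}$ with induced order (it has exactly $d$ elements). For a finite set $A\subset\mathbb N$ and $s\ge1$, $sA=\{b_1+\dots+b_s: b_j\in A\}$, and $0A=\{0\}$. A finite poset is graded if there is $\rho:P\to\mathbb N$ with $\rho(z)=\rho(y)+1$ whenever $z$ covers $y$ (i.e. $y<z$ with nothing strictly between). *)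

theory Defs
  imports Main
begin

inductive_set gen_semigroup :: "nat set \<Rightarrow> nat set" for A :: "nat set" where
  zero: "0 \<in> gen_semigroup A"
| add: "x \<in> gen_semigroup A \<Longrightarrow> b \<in> A \<Longrightarrow> x + b \<in> gen_semigroup A"

definition msg :: "nat set \<Rightarrow> nat set" where
  "msg S = {x \<in> S. x \<noteq> 0 \<and>
      \<not> (\<exists>y\<in>S. \<exists>z\<in>S. y \<noteq> 0 \<and> z \<noteq> 0 \<and> x = y + z)}"

fun sumset :: "nat \<Rightarrow> nat set \<Rightarrow> nat set" where
  "sumset 0 A = {0}"
| "sumset (Suc s) A = {x + b | x b. x \<in> sumset s A \<and> b \<in> A}"

definition apery :: "nat set \<Rightarrow> nat \<Rightarrow> nat set" where
  "apery S d = {y \<in> S. \<not> (d \<le> y \<and> y - d \<in> S)}"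

definition sg_le :: "nat set \<Rightarrow> nat \<Rightarrow> nat \<Rightarrow> bool" where
  "sg_le S y z \<longleftrightarrow> y \<le> z \<and> z - y \<in> S"

definition covers_in :: "'a set \<Rightarrow> ('a \<Rightarrow> 'a \<Rightarrow> bool) \<Rightarrow> 'a \<Rightarrow> 'a \<Rightarrow> bool" where
  "covers_in P le y z \<longleftrightarrow> y \<in> P \<and> z \<in> P \<and> le y z \<and> y \<noteq> z \<and>
      \<not> (\<exists>w\<in>P. le y w \<and> le w z \<and> w \<noteq> y \<and> w \<noteq> z)"

definition graded :: "'a set \<Rightarrow> ('a \<Rightarrow> 'a \<Rightarrow> bool) \<Rightarrow> bool" where
  "graded P le \<longleftrightarrow> (\<exists>\<rho> :: 'a \<Rightarrow> nat. \<forall>y z. covers_in P le y z \<longrightarrow> \<rho> z = \<rho> y + 1)"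

end

theory Submission imports Defs begin

lemma gs_gen: "b \<in> A \<Longrightarrow> b \<in> gen_semigroup A"
  using gen_semigroup.add[OF gen_semigroup.zero] by simp

lemma gs_add: "y \<in> gen_semigroup A \<Longrightarrow> x \<in> gen_semigroup A \<Longrightarrow> x + y \<in> gen_semigroup A"
proof (induction y rule: gen_semigroup.induct)
  case zero then show ?case by simp
next
  case (add y b) then show ?case using gen_semigroup.add[of "x+y" A b] by (simp add: add.assoc)
qed

lemma gs_mult: "x \<in> gen_semigroup A \<Longrightarrow> k * x \<in> gen_semigroup A"
  by (induction k) (auto intro: gs_add gen_semigroup.zero)

lemma gs_sum: "finite I \<Longrightarrow> (\<And>i. i \<in> I \<Longrightarrow> f i \<in> gen_semigroup A) \<Longrightarrow> sum f I \<in> gen_semigroup A"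
  by (induction I rule: finite_induct) (auto intro: gs_add gen_semigroup.zero)

lemma sumset_add: "y \<in> sumset t B \<Longrightarrow> x \<in> sumset s B \<Longrightarrow> x + y \<in> sumset (s + t) B"
proof (induction t arbitrary: y)
  case 0 then show ?case by simp
next
  case (Suc t)
  then obtain y' b where "y = y' + b" "y' \<in> sumset t B" "b \<in> B" by auto
  with Suc.IH[of y'] Suc.prems have "x + y' \<in> sumset (s + t) B" by simp
  then have "(x + y') + b \<in> sumset (Suc (s + t)) B" using \<open>b \<in> B\<close> by auto
  then show ?case using \<open>y = y' + b\<close> by (simp add: add.assoc)
qed

lemma sumset_sub: "B \<subseteq> S \<Longrightarrow> 0 \<in> S \<Longrightarrow> (\<And>x y. x \<in> S \<Longrightarrow> y \<in> S \<Longrightarrow> x + y \<in> S) \<Longrightarrow> sumset s B \<subseteq> S"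
  by (induction s) auto

lemma sumset_ge: "(\<And>b. b \<in> B \<Longrightarrow> 1 \<le> b) \<Longrightarrow> x \<in> sumset s B \<Longrightarrow> s \<le> x"
proof (induction s arbitrary: x)
  case 0 then show ?case by simp
next
  case (Suc s) then show ?case by fastforce
qed

lemma msg_sub: "msg S \<subseteq> S" and msg_nz: "x \<in> msg S \<Longrightarrow> x \<noteq> 0"
  by (auto simp: msg_def)

lemma factor: "w \<in> S \<Longrightarrow> \<exists>s. w \<in> sumset s (msg S)"
proof (induction w rule: less_induct)
  case (less w)
  show ?case
  proof (cases "w = 0")
    case True then show ?thesis by (intro exI[of _ 0]) simp
  next
    case False
    show ?thesis
    proof (cases "w \<in> msg S")
      case True then show ?thesis by (intro exI[of _ 1]) auto
    next
      case nm: False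
      then obtain y z where yz: "y \<in> S" "z \<in> S" "y \<noteq> 0" "z \<noteq> 0" "w = y + z"
        using less.prems False by (auto simp: msg_def)
      have "y < w" "z < w" using yz by auto
      then obtain s t where "y \<in> sumset s (msg S)" "z \<in> sumset t (msg S)"
        using less.IH yz(1,2) by blast
      then show ?thesis using sumset_add yz(5) by blast
    qed
  qed
qed

lemma bezout_set: "finite A \<Longrightarrow> \<exists>c::nat\<Rightarrow>int. int (Gcd A) = (\<Sum>x\<in>A. c x * int x)"
proof (induction A rule: finite_induct)
  case empty then show ?case by simp
next
  case (insert a A)
  then obtain c where c: "int (Gcd A) = (\<Sum>x\<in>A. c x * int x)" by blast
  obtain u v where uv: "u * int a + v * int (Gcd A) = gcd (int a) (int (Gcd A))"
    using bezout_int by blast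
  define c' where "c' x = (if x = a then u else v * c x)" for x
  have "(\<Sum>x\<in>A. c' x * int x) = v * (\<Sum>x\<in>A. c x * int x)"
    using insert(2) by (auto simp: c'_def sum_distrib_left mult.assoc intro!: sum.cong)
  then have "(\<Sum>x\<in>insert a A. c' x * int x) = u * int a + v * int (Gcd A)"
    using insert(1,2) c by (simp add: c'_def)
  then show ?case using uv by (intro exI[of _ c']) (simp add: gcd_int_int_eq)
qed

lemma pos_a:
  assumes "0 < a (1::nat)" and "\<And>i. 1 \<le> i \<Longrightarrow> i < n \<Longrightarrow> a i < a (Suc i)"
  shows "1 \<le> i \<Longrightarrow> i \<le> n \<Longrightarrow> 0 < (a i :: nat)"
proof (induction i)
  case 0 then show ?case by simp
next
  case (Suc i)
  show ?case
  proof (cases "i = 0")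
    case True then show ?thesis using assms by simp
  next
    case False then show ?thesis using Suc assms(2)[of i] by simp
  qed
qed

theorem mainTheorem3:
  fixes a :: "nat \<Rightarrow> nat" and n d :: nat
  assumes "n \<ge> 1"
    and "0 < a 1"
    and "\<And>i. 1 \<le> i \<Longrightarrow> i < n \<Longrightarrow> a i < a (Suc i)"
    and "a n = d"
    and "Gcd (a ` {1..n}) = 1"
  shows "graded (apery (gen_semigroup (a ` {1..n})) d) (sg_le (gen_semigroup (a ` {1..n})))
     \<longleftrightarrow>
     (let S = gen_semigroup (a ` {1..n});
          Ap = apery S d;
          A' = msg S - {a n};
          N = Max {s. Ap \<inter> sumset s A' \<noteq> {}}
      in (\<Sum>s = 0..N. card (Ap \<inter> sumset s A')) = d)"
proof -
  define A where "A = a ` {1..n}"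
  define S where "S = gen_semigroup A"
  define Ap where "Ap = apery S d"
  define A' where "A' = msg S - {a n}"
  have "0 < a n" by (rule pos_a[OF assms(2,3)]) (use assms(1) in auto)
  then have dpos: "0 < d" using assms(4) by simp
  have dS: "d \<in> S" unfolding S_def A_def using assms(1,4) by (auto intro!: gs_gen)
  have finA: "finite A" unfolding A_def by simp
  have AS: "\<And>x. x \<in> A \<Longrightarrow> x \<in> S" unfolding S_def by (rule gs_gen)
  have Sadd: "\<And>x y. x \<in> S \<Longrightarrow> y \<in> S \<Longrightarrow> x + y \<in> S" unfolding S_def using gs_add by blast
  have S0: "0 \<in> S" unfolding S_def by (rule gen_semigroup.zero)
  have Ap_iff: "\<And>w. w \<in> Ap \<longleftrightarrow> w \<in> S \<and> \<not> (d \<le> w \<and> w - d \<in> S)"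
    unfolding Ap_def apery_def by simp
  obtain c where c: "int (Gcd A) = (\<Sum>x\<in>A. c x * int x)" using bezout_set[OF finA] by blast
  define X where "X = (\<Sum>x\<in>A. nat (c x mod int d) * x)"
  have XS: "X \<in> S" unfolding X_def S_def
    by (rule gs_sum[OF finA]) (auto intro: gs_mult gs_gen)
  have "int X mod int d = (\<Sum>x\<in>A. (c x mod int d) * int x) mod int d"
    unfolding X_def using dpos by (simp add: of_nat_sum)
  also have "\<dots> = (\<Sum>x\<in>A. ((c x mod int d) * int x) mod int d) mod int d"
    by (simp add: mod_sum_eq)
  also have "\<dots> = (\<Sum>x\<in>A. (c x * int x) mod int d) mod int d"
    by (simp add: mod_mult_left_eq)
  also have "\<dots> = 1 mod int d" using c assms(5) unfolding A_def by (simp add: mod_sum_eq)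
  finally have Xmod: "X mod d = 1 mod d"
    by (metis of_nat_1 of_nat_eq_iff zmod_int)
  have res: "\<And>r. r < d \<Longrightarrow> \<exists>x\<in>S. x mod d = r"
  proof -
    fix r assume "r < d"
    have "(r * X) mod d = (r * (X mod d)) mod d" by (simp add: mod_mult_right_eq)
    also have "\<dots> = r" using Xmod \<open>r < d\<close> by (simp add: mod_mult_right_eq)
    finally show "\<exists>x\<in>S. x mod d = r" using XS unfolding S_def by (auto intro: gs_mult)
  qed
  have bij: "bij_betw (\<lambda>w. w mod d) Ap {0..<d}"
  proof (rule bij_betwI')
    fix x y assume xy: "x \<in> Ap" "y \<in> Ap"
    show "(x mod d = y mod d) = (x = y)"
    proof
      assume eq: "x mod d = y mod d"
      show "x = y"
      proof (rule ccontr)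
        assume "x \<noteq> y"
        then consider "x < y" | "y < x" by linarith
        then show False
        proof cases
          case 1
          then have "d dvd y - x" using eq mod_eq_dvd_iff_nat[of x y d] by simp
          then obtain k where k: "y - x = d * k" by blast
          then obtain j where "k = Suc j" using 1 by (cases k) auto
          then have "y = x + d + d * j" using k 1 by simp
          then have "y - d = x + (k - 1) * d" "d \<le> y" using \<open>k = Suc j\<close> by simp_all
          moreover have "x + (k - 1) * d \<in> S" using xy Ap_iff dS Sadd unfolding S_def
            by (metis gs_mult)
          ultimately show False using xy Ap_iff by auto
        next
          case 2
          then have "d dvd x - y" using eq mod_eq_dvd_iff_nat[of y x d] by simp
          then obtain k where k: "x - y = d * k" by blast
          then obtain j where "k = Suc j" using 2 by (cases k) auto
          then have "x = y + d + d * j" using k 2 by simp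
          then have "x - d = y + (k - 1) * d" "d \<le> x" using \<open>k = Suc j\<close> by simp_all
          moreover have "y + (k - 1) * d \<in> S" using xy Ap_iff dS Sadd unfolding S_def
            by (metis gs_mult)
          ultimately show False using xy Ap_iff by auto
        qed
      qed
    qed simp
  next
    fix x assume "x \<in> Ap" then show "x mod d \<in> {0..<d}" using dpos by simp
  next
    fix r assume "r \<in> {0..<d}"
    then obtain x where x: "x \<in> S" "x mod d = r" using res by auto
    define m where "m = (LEAST x. x \<in> S \<and> x mod d = r)"
    have m: "m \<in> S" "m mod d = r" using LeastI[of "\<lambda>x. x \<in> S \<and> x mod d = r", OF conjI[OF x]]
      unfolding m_def by auto
    have "m \<in> Ap"
    proof (rule ccontr)
      assume "m \<notin> Ap"
      then have "d \<le> m" "m - d \<in> S" using m Ap_iff by auto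
      moreover have "(m - d) mod d = r" using m \<open>d \<le> m\<close> le_mod_geq by metis
      ultimately have "m \<le> m - d" unfolding m_def by (intro Least_le) simp
      then show False using dpos \<open>d \<le> m\<close> by linarith
    qed
    then show "\<exists>x\<in>Ap. r = x mod d" using m by auto
  qed
  have cardAp: "card Ap = d" using bij_betw_same_card[OF bij] by simp
  have finAp: "finite Ap" using bij_betw_finite[OF bij] by simp
  have apcl: "\<And>w x y. w \<in> Ap \<Longrightarrow> x \<in> S \<Longrightarrow> y \<in> S \<Longrightarrow> w = x + y \<Longrightarrow> x \<in> Ap"
  proof -
    fix w x y assume h: "w \<in> Ap" "x \<in> S" "y \<in> S" "w = x + y"
    show "x \<in> Ap"
    proof (rule ccontr)
      assume "x \<notin> Ap"
      then have "d \<le> x" "x - d \<in> S" using h Ap_iff by auto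
      then have "w - d = (x - d) + y" "d \<le> w" using h by auto
      then show False using Sadd[OF \<open>x - d \<in> S\<close> h(3)] h(1) Ap_iff by auto
    qed
  qed
  have A'S: "A' \<subseteq> S" unfolding A'_def using msg_sub by blast
  have A'pos: "\<And>b. b \<in> A' \<Longrightarrow> 1 \<le> b" unfolding A'_def using msg_nz by fastforce
  have sumS: "\<And>s. sumset s A' \<subseteq> S" using sumset_sub[OF A'S S0] Sadd by blast
  have sumSm: "\<And>s. sumset s (msg S) \<subseteq> S" using sumset_sub[OF msg_sub S0] Sadd by blast
  have restr: "\<And>w. w \<in> sumset s (msg S) \<Longrightarrow> w \<in> Ap \<Longrightarrow> w \<in> sumset s A'" for s
  proof (induction s)
    case 0 then show ?case by simp
  next
    case (Suc s)
    then obtain x b where xb: "w = x + b" "x \<in> sumset s (msg S)" "b \<in> msg S" by auto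
    have xS: "x \<in> S" using xb sumSm by blast
    have bS: "b \<in> S" using xb msg_sub by blast
    have "x \<in> Ap" using apcl[OF Suc.prems(2) xS bS xb(1)] .
    moreover have "b \<noteq> a n"
    proof
      assume "b = a n"
      then have "w - d = x" "d \<le> w" using xb assms(4) by auto
      then show False using Suc.prems(2) xS Ap_iff by auto
    qed
    ultimately have "x \<in> sumset s A'" "b \<in> A'" using Suc.IH xb unfolding A'_def by auto
    then show ?case using xb by auto
  qed
  have L1: "\<And>w. w \<in> Ap \<Longrightarrow> \<exists>s. w \<in> sumset s A'"
    using factor restr Ap_iff by blast
  define U where "U = (\<forall>w\<in>Ap. \<forall>s t. w \<in> sumset s A' \<longrightarrow> w \<in> sumset t A' \<longrightarrow> s = t)"
  have grU: "graded Ap (sg_le S) \<longleftrightarrow> U"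
  proof
    assume "graded Ap (sg_le S)"
    then obtain \<rho> :: "nat \<Rightarrow> nat" where rho: "\<And>y z. covers_in Ap (sg_le S) y z \<Longrightarrow> \<rho> z = \<rho> y + 1"
      unfolding graded_def by blast
    have cov: "covers_in Ap (sg_le S) x (x + b)" if "x \<in> Ap" "b \<in> A'" "x + b \<in> Ap" for x b
    proof -
      have bm: "b \<in> msg S" using that(2) unfolding A'_def by simp
      have "b \<noteq> 0" using msg_nz[OF bm] .
      moreover have "b \<in> S" using bm msg_sub by blast
      moreover have "\<not> (\<exists>v\<in>Ap. sg_le S x v \<and> sg_le S v (x + b) \<and> v \<noteq> x \<and> v \<noteq> x + b)"
      proof
        assume "\<exists>v\<in>Ap. sg_le S x v \<and> sg_le S v (x + b) \<and> v \<noteq> x \<and> v \<noteq> x + b"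
        then obtain v where v: "x \<le> v" "v - x \<in> S" "v \<le> x + b" "x + b - v \<in> S" "v \<noteq> x" "v \<noteq> x + b"
          unfolding sg_le_def by blast
        then have "b = (v - x) + (x + b - v)" "v - x \<noteq> 0" "x + b - v \<noteq> 0" by auto
        then show False using bm v unfolding msg_def by blast
      qed
      ultimately show ?thesis using that unfolding covers_in_def sg_le_def by auto
    qed
    have rank: "\<And>w. w \<in> sumset s A' \<Longrightarrow> w \<in> Ap \<Longrightarrow> \<rho> w = \<rho> 0 + s" for s
    proof (induction s)
      case 0 then show ?case by simp
    next
      case (Suc s)
      then obtain x b where xb: "w = x + b" "x \<in> sumset s A'" "b \<in> A'" by auto
      have xAp: "x \<in> Ap" using apcl[OF Suc.prems(2) _ _ xb(1)] xb sumS A'S by blast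
      have "\<rho> w = \<rho> x + 1" using rho[OF cov[OF xAp xb(3)]] Suc.prems xb by simp
      then show ?case using Suc.IH[OF xb(2) xAp] by simp
    qed
    show U unfolding U_def
    proof (intro ballI allI impI)
      fix w s t assume "w \<in> Ap" "w \<in> sumset s A'" "w \<in> sumset t A'"
      then show "s = t" using rank[of w s] rank[of w t] by simp
    qed
  next
    assume U
    define \<rho> where "\<rho> w = (SOME s. w \<in> sumset s A')" for w
    have rhoI: "\<And>w. w \<in> Ap \<Longrightarrow> w \<in> sumset (\<rho> w) A'"
      unfolding \<rho>_def using L1 by (metis someI_ex)
    show "graded Ap (sg_le S)" unfolding graded_def
    proof (intro exI[of _ \<rho>] allI impI)
      fix y z assume cv: "covers_in Ap (sg_le S) y z"
      then have yz: "y \<in> Ap" "z \<in> Ap" "y \<le> z" "z - y \<in> S" "y \<noteq> z"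
        and nb: "\<not> (\<exists>w\<in>Ap. sg_le S y w \<and> sg_le S w z \<and> w \<noteq> y \<and> w \<noteq> z)"
        unfolding covers_in_def sg_le_def by auto
      have yS: "y \<in> S" using yz Ap_iff by auto
      have zy: "z - y \<in> S" "z - y \<noteq> 0" using yz by auto
      have "\<not> (\<exists>u\<in>S. \<exists>v\<in>S. u \<noteq> 0 \<and> v \<noteq> 0 \<and> z - y = u + v)"
      proof
        assume "\<exists>u\<in>S. \<exists>v\<in>S. u \<noteq> 0 \<and> v \<noteq> 0 \<and> z - y = u + v"
        then obtain u v where uv: "u \<in> S" "v \<in> S" "u \<noteq> 0" "v \<noteq> 0" "z - y = u + v" by blast
        have wS: "y + u \<in> S" using Sadd[OF yS uv(1)] .
        have "z = (y + u) + v" using uv yz by auto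
        then have "y + u \<in> Ap" using apcl[OF yz(2) wS uv(2)] by simp
        moreover have "sg_le S y (y + u)" using uv unfolding sg_le_def by simp
        moreover have "sg_le S (y + u) z" using uv \<open>z = (y + u) + v\<close>
          unfolding sg_le_def by simp
        ultimately show False using nb uv by auto
      qed
      with zy have "z - y \<in> msg S" unfolding msg_def by blast
      moreover have "z - y \<noteq> a n"
      proof
        assume "z - y = a n"
        then have "z - d = y" "d \<le> z" using yz assms(4) by auto
        then show False using yz yS Ap_iff by auto
      qed
      ultimately have "z - y \<in> A'" unfolding A'_def by simp
      then have "y + (z - y) \<in> sumset (Suc (\<rho> y)) A'" using rhoI[OF yz(1)] by auto
      then have "z \<in> sumset (Suc (\<rho> y)) A'" using yz by simp
      then show "\<rho> z = \<rho> y + 1" using \<open>U\<close> rhoI[OF yz(2)] yz(2) unfolding U_def by auto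
    qed
  qed
  define F where "F = {s. Ap \<inter> sumset s A' \<noteq> {}}"
  have Fsub: "F \<subseteq> {0..Max Ap}"
  proof
    fix s assume "s \<in> F"
    then obtain w where "w \<in> Ap" "w \<in> sumset s A'" unfolding F_def by blast
    then have "s \<le> w" "w \<le> Max Ap" using sumset_ge[OF A'pos] finAp by auto
    then show "s \<in> {0..Max Ap}" by simp
  qed
  have finF: "finite F" using finite_subset[OF Fsub] by simp
  define N where "N = Max F"
  define L where "L w = {s \<in> {0..N}. w \<in> sumset s A'}" for w
  have Lall: "\<And>w s. w \<in> Ap \<Longrightarrow> s \<in> L w \<longleftrightarrow> w \<in> sumset s A'"
  proof -
    fix w s assume "w \<in> Ap"
    show "s \<in> L w \<longleftrightarrow> w \<in> sumset s A'"
    proof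
      assume "w \<in> sumset s A'"
      then have "s \<in> F" using \<open>w \<in> Ap\<close> unfolding F_def by blast
      then have "s \<le> N" unfolding N_def using finF by simp
      then show "s \<in> L w" using \<open>w \<in> sumset s A'\<close> unfolding L_def by simp
    qed (simp add: L_def)
  qed
  have finL: "\<And>w. finite (L w)" unfolding L_def by simp
  have Lne: "1 \<le> card (L w)" if wAp: "w \<in> Ap" for w
  proof -
    obtain s where "w \<in> sumset s A'" using L1[OF wAp] by blast
    then have "s \<in> L w" using Lall[OF wAp] by simp
    then have "L w \<noteq> {}" by blast
    then show ?thesis using finL[of w] by (simp add: Suc_le_eq card_gt_0_iff)
  qed
  have sum_eq: "(\<Sum>s = 0..N. card (Ap \<inter> sumset s A')) = (\<Sum>w\<in>Ap. card (L w))"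
  proof -
    have "(\<Sum>s = 0..N. card (Ap \<inter> sumset s A')) = (\<Sum>s = 0..N. \<Sum>w\<in>Ap. if w \<in> sumset s A' then 1 else 0)"
    proof (rule sum.cong)
      fix s
      have "Ap \<inter> sumset s A' = {w \<in> Ap. w \<in> sumset s A'}" by auto
      then show "card (Ap \<inter> sumset s A') = (\<Sum>w\<in>Ap. if w \<in> sumset s A' then 1 else 0)"
        using sum.inter_filter[OF finAp, of "\<lambda>_. 1::nat" "\<lambda>w. w \<in> sumset s A'"] by simp
    qed simp
    also have "\<dots> = (\<Sum>w\<in>Ap. \<Sum>s = 0..N. if w \<in> sumset s A' then 1 else 0)"
      by (rule sum.swap)
    also have "\<dots> = (\<Sum>w\<in>Ap. card (L w))"
    proof (rule sum.cong)
      fix w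
      show "(\<Sum>s = 0..N. if w \<in> sumset s A' then 1 else 0) = card (L w)"
        using sum.inter_filter[of "{0..N}" "\<lambda>_. 1::nat" "\<lambda>s. w \<in> sumset s A'"] unfolding L_def by simp
    qed simp
    finally show ?thesis .
  qed
  have "(\<Sum>w\<in>Ap. card (L w)) = (\<Sum>w\<in>Ap. 1) + (\<Sum>w\<in>Ap. card (L w) - 1)"
  proof -
    have "(\<Sum>w\<in>Ap. card (L w)) = (\<Sum>w\<in>Ap. 1 + (card (L w) - 1))"
    proof (rule sum.cong)
      fix w assume "w \<in> Ap"
      then show "card (L w) = 1 + (card (L w) - 1)" using Lne[of w] by linarith
    qed simp
    then show ?thesis by (simp only: sum.distrib)
  qed
  then have sum2: "(\<Sum>w\<in>Ap. card (L w)) = d + (\<Sum>w\<in>Ap. card (L w) - 1)"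
    using cardAp by simp
  have "(\<Sum>w\<in>Ap. card (L w)) = d \<longleftrightarrow> (\<forall>w\<in>Ap. card (L w) \<le> 1)"
    using sum2 finAp by simp
  also have "\<dots> \<longleftrightarrow> U"
  proof -
    have cU: "card (L w) \<le> 1 \<longleftrightarrow> (\<forall>s t. w \<in> sumset s A' \<longrightarrow> w \<in> sumset t A' \<longrightarrow> s = t)"
      if "w \<in> Ap" for w
      using card_le_Suc0_iff_eq[OF finL[of w]] Lall[OF that] by auto
    show ?thesis unfolding U_def using cU by blast
  qed
  finally have "(\<Sum>s = 0..N. card (Ap \<inter> sumset s A')) = d \<longleftrightarrow> U" using sum_eq by simp
  then have H: "(let S = gen_semigroup (a ` {1..n});
          Ap = apery S d;
          A' = msg S - {a n};
          N = Max {s. Ap \<inter> sumset s A' \<noteq> {}}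
      in (\<Sum>s = 0..N. card (Ap \<inter> sumset s A')) = d) \<longleftrightarrow> U"
    unfolding Let_def N_def F_def Ap_def A'_def S_def A_def .
  have G: "graded (apery (gen_semigroup (a ` {1..n})) d) (sg_le (gen_semigroup (a ` {1..n}))) \<longleftrightarrow> U"
    using grU unfolding Ap_def S_def A_def .
  show ?thesis by (rule trans[OF G H[symmetric]])
qed

end
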